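(* Let $p>5$ be a prime, $q=p^h$, and let $\mathcal{F}$ be the projective closure of $ax^ny^m+x^n+y^m=1$ over $\mathbb{F}_q$, where $a\in\mathbb{F}_q$, $a\ne0$, $a\neq-1$, and $m,n$ are positive integers with $p\nmid mn$, $n\ge m$, $\min\{m,n\}>2$. If $\mathcal{F}$ is nonclassical with respect to conics, then $p\mid(n+1)(n-1)$ and $p\mid(m+1)(m-1)$.
   Context: With $\varphi_0,\dots,\varphi_5$ the monomials of degree 2 in $x,y,1$, $\tau$ separating and $D^{(k)}_\tau$ Hasse derivatives, the order sequence w.r.t. conics is the lexicographically smallest $\varepsilon_0<\dots<\varepsilon_5$ with $\det(D^{(\varepsilon_i)}_\tau\varphi_j)\ne0$; the curve is classical w.r.t. conics if $\varepsilon_i=i$ for all $i$, nonclassical otherwise. *)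

theory Defs
  imports Main "Jordan_Normal_Form.Determinant" "HOL-Computational_Algebra.Polynomial"
begin

(* The function field of the curve is modelled as the subfield K(x,y) of an ambient field
   'b, generated by the image of F_q under a field embedding emb together with x and y. *)

definition field_embedding :: "('a::field \<Rightarrow> 'b::field) \<Rightarrow> bool" where
  "field_embedding emb \<longleftrightarrow> emb 1 = 1 \<and>
     (\<forall>c d. emb (c + d) = emb c + emb d) \<and> (\<forall>c d. emb (c * d) = emb c * emb d)"

definition transcendental_over :: "('a::field \<Rightarrow> 'b::field) \<Rightarrow> 'b \<Rightarrow> bool" where
  "transcendental_over emb x \<longleftrightarrow>
     (\<forall>P :: 'a poly. P \<noteq> 0 \<longrightarrow> poly (map_poly emb P) x \<noteq> 0)"

inductive_set gen_field :: "('a::field \<Rightarrow> 'b::field) \<Rightarrow> 'b \<Rightarrow> 'b \<Rightarrow> 'b set"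
  for emb x y where
  const: "emb c \<in> gen_field emb x y"
| genx: "x \<in> gen_field emb x y"
| geny: "y \<in> gen_field emb x y"
| add: "u \<in> gen_field emb x y \<Longrightarrow> v \<in> gen_field emb x y \<Longrightarrow> u + v \<in> gen_field emb x y"
| mult: "u \<in> gen_field emb x y \<Longrightarrow> v \<in> gen_field emb x y \<Longrightarrow> u * v \<in> gen_field emb x y"
| uminus: "u \<in> gen_field emb x y \<Longrightarrow> - u \<in> gen_field emb x y"
| inverse: "u \<in> gen_field emb x y \<Longrightarrow> inverse u \<in> gen_field emb x y"

(* K(x,y) is then the function field
   of the curve (and of its projective closure). *)
definition generic_point_of_curve ::
  "('a::field \<Rightarrow> 'b::field) \<Rightarrow> 'a \<Rightarrow> nat \<Rightarrow> nat \<Rightarrow> 'b \<Rightarrow> 'b \<Rightarrow> bool" where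
  "generic_point_of_curve emb a n m x y \<longleftrightarrow>
     field_embedding emb \<and> transcendental_over emb x \<and>
     emb a * x ^ n * y ^ m + x ^ n + y ^ m = 1"

(* D is the family of Hasse derivatives D^(k) with respect to tau, trivial on F_q:
   an iterative higher derivation with D^(1) tau = 1 and D^(k) tau = 0 for k >= 2.
   (Existence of such D forces tau to be a separating variable.) *)
definition hasse_derivatives_wrt ::
  "('a::field \<Rightarrow> 'b::field) \<Rightarrow> 'b \<Rightarrow> (nat \<Rightarrow> 'b \<Rightarrow> 'b) \<Rightarrow> bool" where
  "hasse_derivatives_wrt emb \<tau> D \<longleftrightarrow>
     (\<forall>u. D 0 u = u) \<and>
     (\<forall>k u v. D k (u + v) = D k u + D k v) \<and>
     (\<forall>k u v. D k (u * v) = (\<Sum>i\<le>k. D i u * D (k - i) v)) \<and>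
     (\<forall>k c. 0 < k \<longrightarrow> D k (emb c) = 0) \<and>
     (\<forall>i j u. D i (D j u) = of_nat ((i + j) choose i) * D (i + j) u) \<and>
     D 1 \<tau> = 1 \<and> (\<forall>k\<ge>2. D k \<tau> = 0)"

definition conic_monomials :: "'b::field \<Rightarrow> 'b \<Rightarrow> 'b list" where
  "conic_monomials x y = [1, x, y, x^2, x*y, y^2]"

definition conic_det :: "(nat \<Rightarrow> 'b::field \<Rightarrow> 'b) \<Rightarrow> (nat \<Rightarrow> nat) \<Rightarrow> 'b \<Rightarrow> 'b \<Rightarrow> 'b" where
  "conic_det D \<epsilon> x y = det (mat 6 6 (\<lambda>(i, j). D (\<epsilon> i) (conic_monomials x y ! j)))"

(* order sequence w.r.t. conics: lexicographically smallest strictly increasing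
   eps_0 < ... < eps_5 with nonzero determinant.  Classical iff it is (0,1,...,5). *)
definition admissible_conic_orders :: "(nat \<Rightarrow> 'b::field \<Rightarrow> 'b) \<Rightarrow> 'b \<Rightarrow> 'b \<Rightarrow> (nat \<Rightarrow> nat) \<Rightarrow> bool" where
  "admissible_conic_orders D x y \<epsilon> \<longleftrightarrow>
     (\<forall>i j. i < j \<longrightarrow> j < 6 \<longrightarrow> \<epsilon> i < \<epsilon> j) \<and> conic_det D \<epsilon> x y \<noteq> 0"

definition lex_less6 :: "(nat \<Rightarrow> nat) \<Rightarrow> (nat \<Rightarrow> nat) \<Rightarrow> bool" where
  "lex_less6 e f \<longleftrightarrow> (\<exists>k<6. (\<forall>i<k. e i = f i) \<and> e k < f k)"

definition classical_wrt_conics :: "(nat \<Rightarrow> 'b::field \<Rightarrow> 'b) \<Rightarrow> 'b \<Rightarrow> 'b \<Rightarrow> bool" where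
  "classical_wrt_conics D x y \<longleftrightarrow>
     admissible_conic_orders D x y (\<lambda>i. i) \<and>
     (\<forall>e. admissible_conic_orders D x y e \<longrightarrow> \<not> lex_less6 e (\<lambda>i. i))"

end

theory Submission
  imports Defs "HOL-Computational_Algebra.Computational_Algebra"
begin

lemma det_single_col:
  fixes A :: "'a::comm_ring_1 mat"
  assumes A: "A \<in> carrier_mat n n" and j: "j < n" and i: "i < n"
    and z: "\<And>k. k < n \<Longrightarrow> k \<noteq> i \<Longrightarrow> A $$ (k,j) = 0"
  shows "det A = A $$ (i,j) * cofactor A i j"
proof -
  have "det A = (\<Sum>k<n. A $$ (k,j) * cofactor A k j)"
    by (rule laplace_expansion_column[OF A j])
  also have "\<dots> = (\<Sum>k\<in>{i}. A $$ (k,j) * cofactor A k j)"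
    by (rule sum.mono_neutral_cong_right) (use i z in auto)
  finally show ?thesis by simp
qed

lemma mat_delete_mat:
  "mat_delete (mat n n f) i j = mat (n-1) (n-1) (\<lambda>(i',j'). f (if i'<i then i' else Suc i', if j'<j then j' else Suc j'))"
  unfolding mat_delete_def by (rule eq_matI) auto

lemma det_mat_first:
  fixes f :: "nat \<times> nat \<Rightarrow> 'a::comm_ring_1"
  assumes "\<And>k. 0 < k \<Longrightarrow> k < Suc n \<Longrightarrow> f (k,0) = 0"
  shows "det (mat (Suc n) (Suc n) f) = f (0,0) * det (mat n n (\<lambda>(i,j). f (Suc i, Suc j)))"
proof -
  have "det (mat (Suc n) (Suc n) f) = mat (Suc n) (Suc n) f $$ (0,0) * cofactor (mat (Suc n) (Suc n) f) 0 0"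
    by (rule det_single_col[where n="Suc n"]) (use assms in auto)
  then show ?thesis unfolding cofactor_def mat_delete_mat by simp
qed

lemma det3:
  fixes h :: "nat \<times> nat \<Rightarrow> 'a::comm_ring_1"
  shows "det (mat 3 3 h) = h(0,0)*(h(1,1)*h(2,2) - h(1,2)*h(2,1)) - h(1,0)*(h(0,1)*h(2,2) - h(0,2)*h(2,1))
     + h(2,0)*(h(0,1)*h(1,2)-h(0,2)*h(1,1))"
proof -
  have A: "mat 3 3 h \<in> carrier_mat 3 3" by simp
  have "det (mat 3 3 h) = (\<Sum>k<3. mat 3 3 h $$ (k,0) * cofactor (mat 3 3 h) k 0)"
    by (rule laplace_expansion_column[OF A]) simp
  also have "\<dots> = h(0,0)*(h(1,1)*h(2,2) - h(1,2)*h(2,1)) - h(1,0)*(h(0,1)*h(2,2) - h(0,2)*h(2,1))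
     + h(2,0)*(h(0,1)*h(1,2)-h(0,2)*h(1,1))"
  proof -
    have d2: "det (mat 2 2 g) = g(0,0)*g(1,1) - g(1,0)*g(0,1)" for g :: "nat \<times> nat \<Rightarrow> 'a"
    proof -
      have A2: "mat 2 2 g \<in> carrier_mat 2 2" by simp
      have "det (mat 2 2 g) = (\<Sum>k<2. mat 2 2 g $$ (k,0) * cofactor (mat 2 2 g) k 0)"
        by (rule laplace_expansion_column[OF A2]) simp
      also have "\<dots> = g(0,0)*g(1,1) - g(1,0)*g(0,1)"
        by (simp add: numeral_2_eq_2 cofactor_def mat_delete_mat det_single)
      finally show ?thesis .
    qed
    show ?thesis
      by (simp add: numeral_3_eq_3 numeral_2_eq_2 cofactor_def mat_delete_mat d2[unfolded numeral_2_eq_2] algebra_simps)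
  qed
  finally show ?thesis .
qed

lemma det6_pattern:
  fixes f :: "nat \<times> nat \<Rightarrow> 'a::comm_ring_1"
  assumes z0: "\<And>k. 0 < k \<Longrightarrow> k < 6 \<Longrightarrow> f (k,0) = 0"
    and z1: "\<And>k. 1 < k \<Longrightarrow> k < 6 \<Longrightarrow> f (k,1) = 0"
    and z3: "\<And>k. 2 < k \<Longrightarrow> k < 6 \<Longrightarrow> f (k,3) = 0"
  shows "det (mat 6 6 f) = - f(0,0) * f(1,1) * f(2,3) *
     (f(3,2)*(f(4,4)*f(5,5) - f(4,5)*f(5,4)) - f(4,2)*(f(3,4)*f(5,5) - f(3,5)*f(5,4))
     + f(5,2)*(f(3,4)*f(4,5)-f(3,5)*f(4,4)))"
proof -
  have z3': "f(Suc(Suc k), Suc(Suc(Suc 0))) = 0" if "0<k" "k<4" for k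
    using z3[of "Suc (Suc k)"] that by (simp add: numeral_eq_Suc)
  have "det (mat 6 6 f) = det (mat (Suc 5) (Suc 5) f)" by simp
  also have "\<dots> = f(0,0) * det (mat 5 5 (\<lambda>(i,j). f (Suc i, Suc j)))"
    by (rule det_mat_first) (use z0 in auto)
  also have "det (mat 5 5 (\<lambda>(i,j). f (Suc i, Suc j))) = det (mat (Suc 4) (Suc 4) (\<lambda>(i,j). f (Suc i, Suc j)))" by simp
  also have "\<dots> = f(1,1) * det (mat 4 4 (\<lambda>(i,j). f (Suc (Suc i), Suc (Suc j))))"
    by (subst det_mat_first) (use z1 in auto)
  also have "det (mat 4 4 (\<lambda>(i,j). f (Suc (Suc i), Suc (Suc j)))) =
     mat 4 4 (\<lambda>(i,j). f (Suc (Suc i), Suc (Suc j))) $$ (0,1) * cofactor (mat 4 4 (\<lambda>(i,j). f (Suc (Suc i), Suc (Suc j)))) 0 1"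
    by (rule det_single_col[where n=4]) (use z3' in auto)
  also have "\<dots> = - f(2,3) *
     (f(3,2)*(f(4,4)*f(5,5) - f(4,5)*f(5,4)) - f(4,2)*(f(3,4)*f(5,5) - f(3,5)*f(5,4))
     + f(5,2)*(f(3,4)*f(4,5)-f(3,5)*f(4,4)))"
    unfolding cofactor_def mat_delete_mat by (simp add: det3, simp add: numeral_eq_Suc algebra_simps)
  finally show ?thesis by (simp add: algebra_simps)
qed

definition theta :: "'a::field poly \<Rightarrow> 'a poly" where
  "theta p = pCons 0 (pderiv p)"

lemma coeff_theta: "coeff (theta p) i = of_nat i * coeff p i"
  unfolding theta_def by (cases i) (auto simp: coeff_pderiv coeff_pCons)

lemma degree_theta: "degree (theta p) \<le> degree p"
proof (rule degree_le)
  show "\<forall>i>degree p. coeff (theta p) i = 0" by (auto simp: coeff_theta coeff_eq_0)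
qed

definition lowz :: "nat \<Rightarrow> 'a::zero poly \<Rightarrow> bool" where
  "lowz s p \<longleftrightarrow> (\<forall>i<s. coeff p i = 0)"

lemma low_mult:
  fixes p q :: "'a::field poly"
  assumes "lowz s p" "lowz t q"
  shows "lowz (s+t) (p*q) \<and> coeff (p*q) (s+t) = coeff p s * coeff q t"
proof
  show "lowz (s+t) (p*q)" unfolding lowz_def
  proof (intro allI impI)
    fix i assume i: "i < s+t"
    have "coeff (p*q) i = (\<Sum>j\<le>i. coeff p j * coeff q (i-j))" by (rule coeff_mult)
    also have "\<dots> = 0"
    proof (rule sum.neutral, intro ballI)
      fix j assume ji: "j \<in> {..i}"
      show "coeff p j * coeff q (i-j) = 0"
      proof (cases "j < s")
        case True then show ?thesis using assms(1) by (simp add: lowz_def)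
      next
        case False then have "i - j < t" using i ji by auto
        then show ?thesis using assms(2) by (simp add: lowz_def)
      qed
    qed
    finally show "coeff (p*q) i = 0" .
  qed
  have "coeff (p*q) (s+t) = (\<Sum>j\<le>s+t. coeff p j * coeff q (s+t-j))" by (rule coeff_mult)
  also have "\<dots> = (\<Sum>j\<in>{s}. coeff p j * coeff q (s+t-j))"
  proof (rule sum.mono_neutral_cong_right)
    show "\<forall>j\<in>{..s + t} - {s}. coeff p j * coeff q (s + t - j) = 0"
    proof
      fix j assume j: "j \<in> {..s + t} - {s}"
      show "coeff p j * coeff q (s + t - j) = 0"
      proof (cases "j < s")
        case True then show ?thesis using assms(1) by (simp add: lowz_def)
      next
        case False then have "s+t-j < t" using j by auto
        then show ?thesis using assms(2) by (simp add: lowz_def)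
      qed
    qed
  qed auto
  finally show "coeff (p*q) (s+t) = coeff p s * coeff q t" by simp
qed

lemma hi_mult:
  fixes p q :: "'a::field poly"
  assumes "degree p \<le> s" "degree q \<le> t"
  shows "degree (p*q) \<le> s+t \<and> coeff (p*q) (s+t) = coeff p s * coeff q t"
proof
  show "degree (p*q) \<le> s+t" using degree_mult_le[of p q] assms by linarith
  have "coeff (p*q) (s+t) = (\<Sum>j\<le>s+t. coeff p j * coeff q (s+t-j))" by (rule coeff_mult)
  also have "\<dots> = (\<Sum>j\<in>{s}. coeff p j * coeff q (s+t-j))"
  proof (rule sum.mono_neutral_cong_right)
    show "\<forall>j\<in>{..s + t} - {s}. coeff p j * coeff q (s + t - j) = 0"
    proof
      fix j assume j: "j \<in> {..s + t} - {s}"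
      show "coeff p j * coeff q (s + t - j) = 0"
      proof (cases "j < s")
        case True then have "s+t-j > t" using j by auto
        then show ?thesis using assms(2) by (simp add: coeff_eq_0)
      next
        case False then have "j > s" using j by auto
        then show ?thesis using assms(1) by (simp add: coeff_eq_0)
      qed
    qed
  qed auto
  finally show "coeff (p*q) (s+t) = coeff p s * coeff q t" by simp
qed

definition Epoly :: "'a::field \<Rightarrow> nat \<Rightarrow> 'a poly" where
  "Epoly a n = 1 + monom (a - 1) n - monom a (2*n)"

fun Nt :: "'a::field \<Rightarrow> 'a \<Rightarrow> nat \<Rightarrow> nat \<Rightarrow> 'a poly" where
  "Nt A a n 0 = 1"
| "Nt A a n (Suc k) = Epoly a n * theta (Nt A a n k) - smult (of_nat k) (Epoly a n * Nt A a n k)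
     - smult (of_nat k) (theta (Epoly a n) * Nt A a n k) + monom A n * Nt A a n k"

definition ffz :: "nat \<Rightarrow> nat \<Rightarrow> int" where "ffz n k = (\<Prod>i\<in>{1..<k}. int n - int i)"
definition ggz :: "nat \<Rightarrow> nat \<Rightarrow> int" where "ggz n k = (\<Prod>i\<in>{1..<k}. int n + int i)"

lemma ffz_Suc: "ffz n (Suc (Suc k)) = ffz n (Suc k) * (int n - int (Suc k))"
  unfolding ffz_def by (simp add: prod.atLeastLessThan_Suc)
lemma ggz_Suc: "ggz n (Suc (Suc k)) = ggz n (Suc k) * (int n + int (Suc k))"
  unfolding ggz_def by (simp add: prod.atLeastLessThan_Suc)

declare Nt.simps(2)[simp del]

lemma Nt_low:
  fixes A a :: "'a::field"
  assumes n: "n > 0"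
  shows "lowz n (Nt A a n (Suc k)) \<and> coeff (Nt A a n (Suc k)) n = A * of_int (ffz n (Suc k))"
proof (induction k)
  case 0
  have "theta 1 = (0::'a poly)" by (simp add: theta_def)
  then show ?case by (simp add: lowz_def ffz_def coeff_monom Nt.simps)
next
  case (Suc k)
  let ?N = "Nt A a n (Suc k)" and ?E = "Epoly a n"
  have eq: "Nt A a n (Suc (Suc k)) = ?E * theta ?N - smult (of_nat (Suc k)) (?E * ?N)
     - smult (of_nat (Suc k)) (theta ?E * ?N) + monom A n * ?N" by (simp only: Nt.simps)
  have IH1: "lowz n ?N" and IH2: "coeff ?N n = A * of_int (ffz n (Suc k))" using Suc by auto
  have E0: "lowz 0 ?E" by (simp add: lowz_def)
  have Ec0: "coeff ?E 0 = 1" using n by (simp add: Epoly_def coeff_monom)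
  have tN: "lowz n (theta ?N)" using IH1 by (simp add: lowz_def coeff_theta)
  have tNc: "coeff (theta ?N) n = of_nat n * coeff ?N n" by (simp add: coeff_theta)
  have tE: "lowz n (theta ?E)" using n by (auto simp: lowz_def coeff_theta Epoly_def coeff_monom)
  have mA: "lowz n (monom A n)" by (simp add: lowz_def coeff_monom)
  from low_mult[OF E0 tN] have a1: "lowz n (?E * theta ?N)" "coeff (?E * theta ?N) n = of_nat n * coeff ?N n"
    using Ec0 tNc by auto
  from low_mult[OF E0 IH1] have a2: "lowz n (?E * ?N)" "coeff (?E * ?N) n = coeff ?N n"
    using Ec0 by auto
  from low_mult[OF tE IH1] have a3: "lowz n (theta ?E * ?N)" "coeff (theta ?E * ?N) n = 0"
    using n by (auto simp: lowz_def)
  from low_mult[OF mA IH1] have a4: "lowz n (monom A n * ?N)" "coeff (monom A n * ?N) n = 0"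
    using n by (auto simp: lowz_def)
  have "lowz n (Nt A a n (Suc (Suc k)))"
    using a1(1) a2(1) a3(1) a4(1) unfolding eq by (simp add: lowz_def)
  moreover have "coeff (Nt A a n (Suc (Suc k))) n = A * of_int (ffz n (Suc (Suc k)))"
    using a1(2) a2(2) a3(2) a4(2) IH2 unfolding eq by (simp add: ffz_Suc algebra_simps)
  ultimately show ?case by blast
qed

lemma degree_Epoly: "degree (Epoly a n) \<le> 2*n"
  by (rule degree_le) (auto simp: Epoly_def coeff_monom)

lemma Nt_high:
  fixes A a :: "'a::field"
  assumes n: "n > 0"
  shows "degree (Nt A a n (Suc k)) \<le> (2*k+1)*n \<and> coeff (Nt A a n (Suc k)) ((2*k+1)*n) = A * a^k * of_int (ggz n (Suc k))"
proof (induction k)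
  case 0
  have "theta 1 = (0::'a poly)" by (simp add: theta_def)
  then show ?case by (simp add: ggz_def coeff_monom Nt.simps degree_monom_le)
next
  case (Suc k)
  let ?N = "Nt A a n (Suc k)" and ?E = "Epoly a n" and ?d = "(2*k+1)*n"
  have eq: "Nt A a n (Suc (Suc k)) = ?E * theta ?N - smult (of_nat (Suc k)) (?E * ?N)
     - smult (of_nat (Suc k)) (theta ?E * ?N) + monom A n * ?N" by (simp only: Nt.simps)
  have IH1: "degree ?N \<le> ?d" and IH2: "coeff ?N ?d = A * a^k * of_int (ggz n (Suc k))" using Suc by auto
  have E0: "degree ?E \<le> 2*n" by (rule degree_Epoly)
  have Ec0: "coeff ?E (2*n) = - a" using n by (simp add: Epoly_def coeff_monom)
  have tN: "degree (theta ?N) \<le> ?d" using IH1 degree_theta le_trans by blast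
  have tNc: "coeff (theta ?N) ?d = of_nat ?d * coeff ?N ?d" by (simp add: coeff_theta)
  have tE: "degree (theta ?E) \<le> 2*n" using E0 degree_theta le_trans by blast
  have tEc: "coeff (theta ?E) (2*n) = of_nat (2*n) * (- a)" using Ec0 by (simp add: coeff_theta)
  have mA: "degree (monom A n) \<le> n" by (rule degree_monom_le)
  from hi_mult[OF E0 tN] have a1: "degree (?E * theta ?N) \<le> 2*n + ?d" "coeff (?E * theta ?N) (2*n + ?d) = - a * (of_nat ?d * coeff ?N ?d)"
    using Ec0 tNc by auto
  from hi_mult[OF E0 IH1] have a2: "degree (?E * ?N) \<le> 2*n + ?d" "coeff (?E * ?N) (2*n + ?d) = - a * coeff ?N ?d"
    using Ec0 by auto
  from hi_mult[OF tE IH1] have a3: "degree (theta ?E * ?N) \<le> 2*n + ?d" "coeff (theta ?E * ?N) (2*n + ?d) = of_nat (2*n) * (- a) * coeff ?N ?d"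
    using tEc by auto
  from hi_mult[OF mA IH1] have a4': "degree (monom A n * ?N) \<le> n + ?d" by auto
  then have a4: "degree (monom A n * ?N) \<le> 2*n + ?d" "coeff (monom A n * ?N) (2*n + ?d) = 0"
    using n by (auto intro: coeff_eq_0)
  have dd: "(2 * Suc k + 1) * n = 2*n + ?d" by (simp add: algebra_simps)
  have "degree (Nt A a n (Suc (Suc k))) \<le> 2*n + ?d"
    unfolding eq using a1(1) a2(1) a3(1) a4(1)
    by (intro degree_add_le degree_diff_le le_trans[OF degree_smult_le]) auto
  moreover have "coeff (Nt A a n (Suc (Suc k))) (2*n + ?d) = A * a^(Suc k) * of_int (ggz n (Suc (Suc k)))"
    using a1(2) a2(2) a3(2) a4(2) IH2 unfolding eq by (simp add: ggz_Suc algebra_simps)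
  ultimately show ?case unfolding dd by blast
qed

lemma Nt_low': "0 < n \<Longrightarrow> 0 < k \<Longrightarrow> lowz n (Nt A a n k) \<and> coeff (Nt A a n k) n = A * of_int (ffz n k)"
  using Nt_low[of n A a "k - 1"] by simp

lemma Nt_high': "0 < n \<Longrightarrow> 0 < k \<Longrightarrow> degree (Nt A a n k) \<le> (2*k-1)*n \<and> coeff (Nt A a n k) ((2*k-1)*n) = A * a^(k-1) * of_int (ggz n k)"
proof (cases k)
  case (Suc j)
  assume "0 < n"
  moreover have "2*k-1 = 2*j+1" using Suc by simp
  ultimately show ?thesis using Nt_high[of n A a j] Suc by simp
qed simp

definition Qp :: "'a::field \<Rightarrow> 'a \<Rightarrow> nat \<Rightarrow> 'a poly" where
  "Qp A a n = smult 40 (Nt A a n 3 * Nt A a n 3 * Nt A a n 3) - smult 45 (Nt A a n 2 * Nt A a n 3 * Nt A a n 4)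
     + smult 9 (Nt A a n 2 * Nt A a n 2 * Nt A a n 5)"

lemma ffz_vals: "ffz n 2 = int n - 1" "ffz n 3 = (int n - 1)*(int n - 2)"
  "ffz n 4 = (int n - 1)*(int n - 2)*(int n - 3)" "ffz n 5 = (int n - 1)*(int n - 2)*(int n - 3)*(int n - 4)"
  by (simp_all add: ffz_def numeral_eq_Suc prod.atLeastLessThan_Suc)
lemma ggz_vals: "ggz n 2 = int n + 1" "ggz n 3 = (int n + 1)*(int n + 2)"
  "ggz n 4 = (int n + 1)*(int n + 2)*(int n + 3)" "ggz n 5 = (int n + 1)*(int n + 2)*(int n + 3)*(int n + 4)"
  by (simp_all add: ggz_def numeral_eq_Suc prod.atLeastLessThan_Suc)

lemma Qp_low:
  fixes A a :: "'a::field"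
  assumes n: "n > 0"
  shows "coeff (Qp A a n) (n+n+n) = A^3 * of_int (2*(int n-1)^3*(int n-2)*(2*int n-1)*(int n+1))"
proof -
  have l2: "lowz n (Nt A a n 2)" "coeff (Nt A a n 2) n = A * of_int (ffz n 2)" using Nt_low'[OF n, of 2] by auto
  have l3: "lowz n (Nt A a n 3)" "coeff (Nt A a n 3) n = A * of_int (ffz n 3)" using Nt_low'[OF n, of 3] by auto
  have l4: "lowz n (Nt A a n 4)" "coeff (Nt A a n 4) n = A * of_int (ffz n 4)" using Nt_low'[OF n, of 4] by auto
  have l5: "lowz n (Nt A a n 5)" "coeff (Nt A a n 5) n = A * of_int (ffz n 5)" using Nt_low'[OF n, of 5] by auto
  have t1: "coeff (Nt A a n 3 * Nt A a n 3 * Nt A a n 3) (n+n+n) = (A * of_int (ffz n 3))^3"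
    using low_mult[OF conjunct1[OF low_mult[OF l3(1) l3(1)]] l3(1)] low_mult[OF l3(1) l3(1)] l3(2)
    by (simp add: power3_eq_cube)
  have t2: "coeff (Nt A a n 2 * Nt A a n 3 * Nt A a n 4) (n+n+n) = (A * of_int (ffz n 2)) * (A * of_int (ffz n 3)) * (A * of_int (ffz n 4))"
    using low_mult[OF conjunct1[OF low_mult[OF l2(1) l3(1)]] l4(1)] low_mult[OF l2(1) l3(1)] l2(2) l3(2) l4(2)
    by simp
  have t3: "coeff (Nt A a n 2 * Nt A a n 2 * Nt A a n 5) (n+n+n) = (A * of_int (ffz n 2))^2 * (A * of_int (ffz n 5))"
    using low_mult[OF conjunct1[OF low_mult[OF l2(1) l2(1)]] l5(1)] low_mult[OF l2(1) l2(1)] l2(2) l5(2)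
    by (simp add: power2_eq_square)
  have "coeff (Qp A a n) (n+n+n) = A^3 * of_int (40 * ffz n 3 ^ 3 - 45 * ffz n 2 * ffz n 3 * ffz n 4 + 9 * ffz n 2 ^ 2 * ffz n 5)"
    unfolding Qp_def using t1 t2 t3 by (simp add: algebra_simps power2_eq_square power3_eq_cube)
  also have "40 * ffz n 3 ^ 3 - 45 * ffz n 2 * ffz n 3 * ffz n 4 + 9 * ffz n 2 ^ 2 * ffz n 5
     = 2*(int n-1)^3*(int n-2)*(2*int n-1)*(int n+1)"
    unfolding ffz_vals by (simp add: power2_eq_square power3_eq_cube algebra_simps)
  finally show ?thesis .
qed

lemma Qp_high:
  fixes A a :: "'a::field"
  assumes n: "n > 0"
  shows "coeff (Qp A a n) (5*n+5*n+5*n) = A^3 * a^6 * of_int (2*(int n+1)^3*(int n+2)*(2*int n+1)*(int n-1))"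
proof -
  have l2: "degree (Nt A a n 2) \<le> 3*n" "coeff (Nt A a n 2) (3*n) = A * a * of_int (ggz n 2)" using Nt_high'[OF n, of 2] by auto
  have l3: "degree (Nt A a n 3) \<le> 5*n" "coeff (Nt A a n 3) (5*n) = A * a^2 * of_int (ggz n 3)" using Nt_high'[OF n, of 3] by auto
  have l4: "degree (Nt A a n 4) \<le> 7*n" "coeff (Nt A a n 4) (7*n) = A * a^3 * of_int (ggz n 4)" using Nt_high'[OF n, of 4] by auto
  have l5: "degree (Nt A a n 5) \<le> 9*n" "coeff (Nt A a n 5) (9*n) = A * a^4 * of_int (ggz n 5)" using Nt_high'[OF n, of 5] by auto
  have t1: "coeff (Nt A a n 3 * Nt A a n 3 * Nt A a n 3) (5*n+5*n+5*n) = (A * a^2 * of_int (ggz n 3))^3"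
    using hi_mult[OF conjunct1[OF hi_mult[OF l3(1) l3(1)]] l3(1)] hi_mult[OF l3(1) l3(1)] l3(2)
    by (simp add: power3_eq_cube)
  have e2: "5*n+5*n+5*n = 3*n+5*n+7*n" "5*n+5*n+5*n = 3*n+3*n+9*n" by simp_all
  have t2: "coeff (Nt A a n 2 * Nt A a n 3 * Nt A a n 4) (5*n+5*n+5*n) = (A * a * of_int (ggz n 2)) * (A * a^2 * of_int (ggz n 3)) * (A * a^3 * of_int (ggz n 4))"
    unfolding e2(1)
    using hi_mult[OF conjunct1[OF hi_mult[OF l2(1) l3(1)]] l4(1)] hi_mult[OF l2(1) l3(1)] l2(2) l3(2) l4(2)
    by simp
  have t3: "coeff (Nt A a n 2 * Nt A a n 2 * Nt A a n 5) (5*n+5*n+5*n) = (A * a * of_int (ggz n 2))^2 * (A * a^4 * of_int (ggz n 5))"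
    unfolding e2(2)
    using hi_mult[OF conjunct1[OF hi_mult[OF l2(1) l2(1)]] l5(1)] hi_mult[OF l2(1) l2(1)] l2(2) l5(2)
    by (simp add: power2_eq_square)
  have pw: "a^6 = a*a*a*a*a*a" "a^4 = a*a*a*a" "a^3 = a*a*a" "a^2 = a*a"
    by (simp_all add: eval_nat_numeral)
  have "coeff (Qp A a n) (5*n+5*n+5*n) = A^3 * a^6 * of_int (40 * ggz n 3 ^ 3 - 45 * ggz n 2 * ggz n 3 * ggz n 4 + 9 * ggz n 2 ^ 2 * ggz n 5)"
    unfolding Qp_def coeff_add coeff_diff coeff_smult t1 t2 t3 unfolding pw by (simp add: algebra_simps power2_eq_square power3_eq_cube)
  also have "40 * ggz n 3 ^ 3 - 45 * ggz n 2 * ggz n 3 * ggz n 4 + 9 * ggz n 2 ^ 2 * ggz n 5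
     = 2*(int n+1)^3*(int n+2)*(2*int n+1)*(int n-1)"
    unfolding ggz_vals by (simp add: power2_eq_square power3_eq_cube algebra_simps)
  finally show ?thesis .
qed

lemma fe_hom: "field_embedding emb \<Longrightarrow> field_hom emb"
  unfolding field_embedding_def
proof -
  assume h: "emb 1 = 1 \<and> (\<forall>c d. emb (c + d) = emb c + emb d) \<and> (\<forall>c d. emb (c * d) = emb c * emb d)"
  have "emb 0 = emb (0+0)" by simp
  also have "\<dots> = emb 0 + emb 0" using h by blast
  finally have z: "emb 0 = 0" by (metis add_cancel_right_right)
  show "field_hom emb" by unfold_locales (use h z in auto)
qed

definition is_deriv :: "('a::field \<Rightarrow> 'b::field) \<Rightarrow> ('b \<Rightarrow> 'b) \<Rightarrow> bool" where
  "is_deriv emb d \<longleftrightarrow> (\<forall>u v. d (u+v) = d u + d v) \<and> (\<forall>u v. d (u*v) = u * d v + d u * v) \<and> (\<forall>c. d (emb c) = 0)"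

context
  fixes emb :: "'a::field \<Rightarrow> 'b::field"
  assumes fe: "field_embedding emb"
begin

interpretation h: field_hom emb by (rule fe_hom[OF fe])

lemma map_poly_emb_add: "map_poly emb (p + q) = map_poly emb p + map_poly emb q"
  by (rule poly_eqI) (simp add: coeff_map_poly h.hom_add)
lemma map_poly_emb_diff: "map_poly emb (p - q) = map_poly emb p - map_poly emb q"
  by (rule poly_eqI) (simp add: coeff_map_poly h.hom_minus)
lemma map_poly_emb_mult: "map_poly emb (p * q) = map_poly emb p * map_poly emb q"
  by (rule poly_eqI) (simp add: coeff_map_poly coeff_mult h.hom_sum h.hom_mult)
lemma map_poly_emb_smult: "map_poly emb (smult c p) = smult (emb c) (map_poly emb p)"
  by (rule poly_eqI) (simp add: coeff_map_poly h.hom_mult)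
lemma map_poly_emb_pderiv: "map_poly emb (pderiv p) = pderiv (map_poly emb p)"
  by (rule poly_eqI) (simp add: coeff_map_poly coeff_pderiv h.hom_mult h.hom_of_nat h.hom_add)


lemma map_poly_emb_power: "map_poly emb (p ^ k) = map_poly emb p ^ k"
  by (induction k) (simp_all add: map_poly_emb_mult)

end

context
  fixes emb :: "'a::field \<Rightarrow> 'b::field" and d :: "'b \<Rightarrow> 'b"
  assumes fe: "field_embedding emb" and der: "is_deriv emb d"
begin

interpretation h: field_hom emb by (rule fe_hom[OF fe])

lemma d_add: "d (u+v) = d u + d v" using der by (simp add: is_deriv_def)
lemma d_mult: "d (u*v) = u * d v + d u * v" using der by (simp add: is_deriv_def)
lemma d_emb: "d (emb c) = 0" using der by (simp add: is_deriv_def)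
lemma d_0: "d 0 = 0" using d_emb[of 0] by simp
lemma d_1: "d 1 = 0" using d_emb[of 1] by simp
lemma d_of_nat: "d (of_nat k) = 0" using d_emb[of "of_nat k"] by (simp add: h.hom_of_nat)
lemma d_numeral: "d (numeral k) = 0" using d_of_nat[of "numeral k"] by simp
lemma d_uminus: "d (- u) = - d u"
proof -
  have "d (u + - u) = 0" by (simp add: d_0)
  then show ?thesis unfolding d_add by (simp add: add_eq_0_iff)
qed
lemma d_diff: "d (u - v) = d u - d v"
  using d_add[of u "-v"] d_uminus[of v] by simp
lemma d_power: "d (u ^ Suc k) = of_nat (Suc k) * u ^ k * d u"
  by (induction k) (simp_all add: d_mult algebra_simps)
lemma d_power': "d (u ^ k) = of_nat k * u ^ (k - 1) * d u"
  by (cases k) (simp_all add: d_1 d_power del: power_Suc)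
lemma d_inverse: "u \<noteq> 0 \<Longrightarrow> d (inverse u) = - d u * (inverse u)^2"
proof -
  assume u: "u \<noteq> 0"
  have "d (u * inverse u) = 0" using u by (simp add: d_1)
  then have "u * d (inverse u) = - d u * inverse u" unfolding d_mult by (simp add: eq_neg_iff_add_eq_0)
  then show ?thesis using u by (simp add: field_simps power2_eq_square)
qed
lemma d_sum: "d (\<Sum>i\<in>S. f i) = (\<Sum>i\<in>S. d (f i))"
  by (induction S rule: infinite_finite_induct) (simp_all add: d_0 d_add)

lemma d_poly:
  fixes P :: "'b poly"
  assumes "\<And>i. d (coeff P i) = 0"
  shows "d (poly P x) = poly (pderiv P) x * d x"
  using assms
proof (induction P)
  case 0 then show ?case by (simp add: d_0)
next
  case (pCons c P)
  have c0: "d c = 0" using pCons.prems[of 0] by simp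
  have "d (coeff P i) = 0" for i using pCons.prems[of "Suc i"] by simp
  then have IH: "d (poly P x) = poly (pderiv P) x * d x" using pCons.IH by blast
  show ?case by (simp add: d_add d_mult c0 IH pderiv_pCons algebra_simps)
qed

lemma d_ev: "d (poly (map_poly emb q) x) = poly (map_poly emb (pderiv q)) x * d x"
  unfolding map_poly_emb_pderiv[OF fe] by (rule d_poly) (simp add: coeff_map_poly d_emb)

lemma ev_theta: "poly (map_poly emb (theta q)) x = x * poly (map_poly emb (pderiv q)) x"
  unfolding theta_def by (simp add: map_poly_pCons)


lemma key:
  fixes a :: 'a and x y :: 'b and n m :: nat
  assumes tr: "transcendental_over emb x"
    and rel: "emb a * x ^ n * y ^ m + x ^ n + y ^ m = 1"
    and a0: "a \<noteq> 0" and a1: "a \<noteq> -1" and n: "n > 0" and m: "m > 0"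
    and nz: "of_nat n \<noteq> (0::'a)" and mz: "of_nat m \<noteq> (0::'a)"
    and dx: "d x = 1"
    and W: "(d^^2) y * (40*((d^^3) y)^3 - 45*(d^^2) y*(d^^3) y*(d^^4) y + 9*((d^^2) y)^2*(d^^5) y) = 0"
  shows "of_int (int n - 1) = (0::'a) \<or>
    (of_int (2*(int n-1)^3*(int n-2)*(2*int n-1)*(int n+1)) = (0::'a) \<and>
     of_int (2*(int n+1)^3*(int n+2)*(2*int n+1)*(int n-1)) = (0::'a))"
proof -
  define ev where "ev q = poly (map_poly emb q) x" for q
  define A where "A = - of_nat n * (a + 1) / of_nat m"
  define Ee where "Ee = ev (Epoly a n)"
  define ea where "ea = emb a"
  define w where "w = x ^ n"
  define v where "v = y ^ m"
  have trz: "q = 0" if "ev q = 0" for q using tr that unfolding transcendental_over_def ev_def by blast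
  have ev_add: "ev (p + q) = ev p + ev q" for p q by (simp add: ev_def map_poly_emb_add[OF fe])
  have ev_diff: "ev (p - q) = ev p - ev q" for p q by (simp add: ev_def map_poly_emb_diff[OF fe])
  have ev_mult: "ev (p * q) = ev p * ev q" for p q by (simp add: ev_def map_poly_emb_mult[OF fe])
  have ev_smult: "ev (smult c p) = emb c * ev p" for c p by (simp add: ev_def map_poly_emb_smult[OF fe])
  have ev_monom: "ev (monom c k) = emb c * x ^ k" for c k by (simp add: ev_def map_poly_monom poly_monom)
  have ev_1: "ev 1 = 1" by (simp add: ev_def)
  have ev_X: "ev [:0,1:] = x" by (simp add: ev_def map_poly_pCons)
  have x0: "x \<noteq> 0" using trz[of "[:0,1:]"] ev_X by auto
  have xx: "x ^ (2*n) = x^n * x^n" by (simp add: mult_2 power_add)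
  have Ee_eq: "Ee = (1 + ea * w) * (1 - w)"
    unfolding Ee_def Epoly_def ev_add ev_diff ev_monom ev_1 ea_def w_def xx
    by (simp add: h.hom_minus algebra_simps)
  have E_nz: "Epoly a n \<noteq> 0"
  proof
    assume "Epoly a n = 0"
    then have "coeff (Epoly a n) 0 = 0" by simp
    then show False using n by (simp add: Epoly_def coeff_monom)
  qed
  have Ee0: "Ee \<noteq> 0" using trz E_nz unfolding Ee_def by blast
  have w1: "1 - w \<noteq> 0" and aw1': "1 + ea * w \<noteq> 0" using Ee0 unfolding Ee_eq by auto
  have aw1: "ea * w + 1 \<noteq> 0" using aw1' by (simp add: add.commute)
  have rel': "v * (ea*w + 1) = 1 - w" using rel unfolding v_def w_def ea_def by (simp add: algebra_simps)
  have rel'': "(ea*v + 1) * (ea*w + 1) = ea + 1"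
  proof -
    have "ea * (ea * w * v + w + v) = ea" using rel unfolding v_def w_def ea_def by simp
    then show ?thesis by (simp add: algebra_simps)
  qed
  have y0: "y \<noteq> 0"
  proof
    assume "y = 0"
    then have "v = 0" using m by (simp add: v_def)
    then show False using rel' w1 by simp
  qed
  have Aeq: "emb A = - of_nat n * (ea + 1) / of_nat m" unfolding A_def ea_def
    by (simp add: h.hom_div h.hom_mult h.hom_of_nat h.hom_add h.hom_uminus)
  have mzb: "of_nat m \<noteq> (0::'b)" using mz h.hom_of_nat[of m] by (metis h.hom_0_iff)
  have nzb: "of_nat n \<noteq> (0::'b)" using nz h.hom_of_nat[of n] by (metis h.hom_0_iff)
  have a10: "a + 1 \<noteq> 0" using a1 eq_neg_iff_add_eq_0 by blast
  have A0: "A \<noteq> 0" unfolding A_def using nz mz a10 by auto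
  define Z where "Z = inverse (x * Ee)"
  have ZxE: "Z * (x * Ee) = 1" unfolding Z_def using x0 Ee0 by (simp add: field_simps)
  have Z0: "Z \<noteq> 0" unfolding Z_def using x0 Ee0 by simp
  have dy: "d y = y * (emb A * w) * Z"
  proof -
    obtain X1 where X1: "w = X1 * x" "x^(n-1) = X1" using n unfolding w_def by (metis power_minus_mult)
    obtain Y1 where Y1: "v = Y1 * y" "y^(m-1) = Y1" using m unfolding v_def by (metis power_minus_mult)
    have "d (emb a * x ^ n * y ^ m + x ^ n + y ^ m) = d 1" using rel by simp
    then have e1: "ea * ((X1*x) * (of_nat m * Y1 * d y) + of_nat n * X1 * (Y1*y)) + of_nat n * X1 + of_nat m * Y1 * d y = 0"
      unfolding d_add d_mult d_emb d_1 d_power' dx using X1 Y1 unfolding w_def v_def ea_def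
      by (simp add: algebra_simps)
    have "of_nat m * x * d y * (v * (ea*w + 1)) + of_nat n * w * y * (ea*v + 1) =
      x * y * (ea * ((X1*x) * (of_nat m * Y1 * d y) + of_nat n * X1 * (Y1*y)) + of_nat n * X1 + of_nat m * Y1 * d y)"
      unfolding X1(1) Y1(1) by (simp add: algebra_simps)
    then have s1: "of_nat m * x * d y * (v * (ea*w + 1)) = - (of_nat n * w * y * (ea*v + 1))"
      using e1 by (simp add: eq_neg_iff_add_eq_0)
    then have s2: "of_nat m * x * d y * (1 - w) = - (of_nat n * w * y * (ea*v + 1))" using rel' by simp
    have "of_nat m * x * d y * ((1 - w) * (ea*w+1)) = - (of_nat n * w * y * ((ea*v + 1) * (ea*w+1)))"
      using arg_cong[OF s2, of "\<lambda>t. t * (ea*w+1)"] by (simp add: algebra_simps)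
    then have s3: "of_nat m * x * d y * ((1 - w) * (ea*w+1)) = - (of_nat n * w * y * (ea + 1))"
      using rel'' by simp
    have Ee': "Ee = (1 - w) * (ea*w+1)" unfolding Ee_eq by (simp add: algebra_simps)
    have K0: "of_nat m * x * ((1-w)*(ea*w+1)) \<noteq> 0" using x0 w1 aw1 mzb by simp
    have dyq: "d y = - (of_nat n * w * y * (ea + 1)) / (of_nat m * x * ((1-w)*(ea*w+1)))"
      using s3 K0 by (simp add: eq_divide_eq algebra_simps)
    show ?thesis unfolding Aeq Z_def Ee' dyq using x0 w1 aw1 mzb
      by (simp add: field_simps)
  qed
  define dE where "dE = ev (pderiv (Epoly a n))"
  have dEe: "d Ee = dE" unfolding Ee_def dE_def ev_def using d_ev[of "Epoly a n" x] dx by simp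
  have dZ: "d Z = - (Ee + x * dE) * Z^2"
    unfolding Z_def using d_inverse[of "x * Ee"] x0 Ee0 by (simp add: d_mult dx dEe algebra_simps)
  have dZk: "d (Z^k) = of_nat k * Z^(Suc k) * (- (Ee + x * dE))" for k
  proof (induction k)
    case 0 then show ?case by (simp add: d_1)
  next
    case (Suc k)
    have "d (Z^Suc k) = d (Z * Z^k)" by simp
    also have "\<dots> = Z * d (Z^k) + d Z * Z^k" by (rule d_mult)
    finally show ?case unfolding Suc dZ by (simp add: algebra_simps power2_eq_square)
  qed
  have yk: "(d^^k) y = y * ev (Nt A a n k) * Z^k" for k
  proof (induction k)
    case 0 then show ?case by (simp add: ev_1)
  next
    case (Suc k)
    define N where "N = ev (Nt A a n k)"
    define dN where "dN = ev (pderiv (Nt A a n k))"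
    have dNe: "d N = dN" unfolding N_def dN_def ev_def using d_ev[of "Nt A a n k" x] dx by simp
    have thN: "ev (theta (Nt A a n k)) = x * dN" unfolding dN_def ev_def by (rule ev_theta)
    have thE: "ev (theta (Epoly a n)) = x * dE" unfolding dE_def ev_def by (rule ev_theta)
    have NS: "ev (Nt A a n (Suc k)) = Ee * (x * dN) - of_nat k * (Ee * N) - of_nat k * ((x * dE) * N) + (emb A * w) * N"
      unfolding Nt.simps(2) ev_add ev_diff ev_mult ev_smult thN thE ev_monom
      by (simp add: N_def Ee_def w_def h.hom_of_nat)
    have aux: "y * Z^(Suc k) * (Ee*(x*dN)) = (y*dN*Z^k) * (Z*(x*Ee))" by (simp add: algebra_simps)
    have "(d^^Suc k) y = d (y * N * Z^k)" using Suc by (simp add: N_def)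
    also have "\<dots> = y * N * d (Z^k) + (y * d N + d y * N) * Z^k" by (simp add: d_mult)
    also have "\<dots> = y * ev (Nt A a n (Suc k)) * Z^(Suc k)"
      unfolding NS dZk dNe dy using aux unfolding ZxE by (simp add: algebra_simps)
    finally show ?case .
  qed
  define Q where "Q = Qp A a n"
  have evQ: "ev Q = 40 * ev (Nt A a n 3)^3 - 45 * ev (Nt A a n 2) * ev (Nt A a n 3) * ev (Nt A a n 4)
      + 9 * ev (Nt A a n 2)^2 * ev (Nt A a n 5)"
    unfolding Q_def Qp_def ev_add ev_diff ev_mult ev_smult by (simp add: h.hom_numeral power2_eq_square power3_eq_cube)
  have "(d^^2) y * (40*((d^^3) y)^3 - 45*(d^^2) y*(d^^3) y*(d^^4) y + 9*((d^^2) y)^2*(d^^5) y)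
     = y^4 * Z^11 * (ev (Nt A a n 2) * ev Q)"
    unfolding yk evQ by (simp add: eval_nat_numeral algebra_simps)
  then have "ev (Nt A a n 2) * ev Q = 0" using W y0 Z0 by simp
  then have "Nt A a n 2 = 0 \<or> Q = 0" using trz by auto
  then show ?thesis
  proof
    assume "Nt A a n 2 = 0"
    then have "A * of_int (ffz n 2) = 0" using Nt_low'[OF n, of 2 A a] by simp
    then show ?thesis using A0 by (simp add: ffz_vals)
  next
    assume "Q = 0"
    then have "coeff (Qp A a n) (n+n+n) = 0" "coeff (Qp A a n) (5*n+5*n+5*n) = 0" unfolding Q_def by simp_all
    then show ?thesis unfolding Qp_low[OF n] Qp_high[OF n] using A0 a0 by simp
  qed
qed

end

lemma nt:
  fixes p n :: nat
  assumes p: "prime p" and p5: "p > 5" and n1: "n \<ge> 1"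
    and h: "int p dvd (int n - 1) \<or> (int p dvd (2*(int n-1)^3*(int n-2)*(2*int n-1)*(int n+1)) \<and>
      int p dvd (2*(int n+1)^3*(int n+2)*(2*int n+1)*(int n-1)))"
  shows "p dvd (n+1)*(n-1)"
proof -
  have pi: "prime (int p)" using p by simp
  have n2: "\<not> int p dvd 2" using p5 by (auto dest!: zdvd_imp_le)
  have n4: "\<not> int p dvd 4" using p5 by (auto dest!: zdvd_imp_le)
  have n5: "\<not> int p dvd 5" using p5 by (auto dest!: zdvd_imp_le)
  have goal: "int p dvd (int n + 1) * (int n - 1)"
  proof -
    consider "int p dvd (int n - 1)" | "int p dvd (int n + 1)"
      | "\<not> int p dvd (int n - 1)" "\<not> int p dvd (int n + 1)"
        "int p dvd (int n-2) \<or> int p dvd (2*int n-1)" "int p dvd (int n+2) \<or> int p dvd (2*int n+1)"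
    proof -
      assume c1: "int p dvd (int n - 1) \<Longrightarrow> thesis" and c2: "int p dvd (int n + 1) \<Longrightarrow> thesis"
        and c3: "\<not> int p dvd (int n - 1) \<Longrightarrow> \<not> int p dvd (int n + 1) \<Longrightarrow>
        int p dvd (int n-2) \<or> int p dvd (2*int n-1) \<Longrightarrow> int p dvd (int n+2) \<or> int p dvd (2*int n+1) \<Longrightarrow> thesis"
      show thesis
      proof (cases "int p dvd (int n - 1) \<or> int p dvd (int n + 1)")
        case True then show ?thesis using c1 c2 by blast
      next
        case False
        then have K: "int p dvd (2*(int n-1)^3*(int n-2)*(2*int n-1)*(int n+1))"
          "int p dvd (2*(int n+1)^3*(int n+2)*(2*int n+1)*(int n-1))" using h by auto
        from K(1) False n2 have "int p dvd (int n-2) \<or> int p dvd (2*int n-1)"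
          by (auto simp: prime_dvd_mult_iff[OF pi] prime_dvd_power_iff[OF pi])
        moreover from K(2) False n2 have "int p dvd (int n+2) \<or> int p dvd (2*int n+1)"
          by (auto simp: prime_dvd_mult_iff[OF pi] prime_dvd_power_iff[OF pi])
        ultimately show ?thesis using c3 False by blast
      qed
    qed
    then show ?thesis
    proof cases
      case 1 then show ?thesis by simp
    next
      case 2 then show ?thesis by simp
    next
      case 3
      have "int p dvd 4 \<or> int p dvd 5 \<or> int p dvd 2"
      proof -
        { assume a: "int p dvd (int n-2)" "int p dvd (int n+2)"
          have "int p dvd (int n+2) - (int n-2)" by (rule dvd_diff[OF a(2) a(1)])
          then have "int p dvd 4" by simp }
        moreover
        { assume a: "int p dvd (int n-2)" "int p dvd (2*int n+1)"
          have "int p dvd (2*int n+1) - 2*(int n-2)" by (rule dvd_diff[OF a(2) dvd_mult[OF a(1), of 2]])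
          then have "int p dvd 5" by simp }
        moreover
        { assume a: "int p dvd (2*int n-1)" "int p dvd (int n+2)"
          have "int p dvd 2*(int n+2) - (2*int n-1)" by (rule dvd_diff[OF dvd_mult[OF a(2), of 2] a(1)])
          then have "int p dvd 5" by simp }
        moreover
        { assume a: "int p dvd (2*int n-1)" "int p dvd (2*int n+1)"
          have "int p dvd (2*int n+1) - (2*int n-1)" by (rule dvd_diff[OF a(2) a(1)])
          then have "int p dvd 2" by simp }
        ultimately show ?thesis using 3 by blast
      qed
      then show ?thesis using n2 n4 n5 by blast
    qed
  qed
  have "int ((n+1)*(n-1)) = (int n + 1) * (int n - 1)" using n1 by (simp add: of_nat_diff algebra_simps)
  then show ?thesis using goal by (metis int_dvd_int_iff)
qed


lemma finite_deg: "finite {q::'a::{zero,finite} poly. degree q \<le> k}"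
proof (rule finite_imageD[of "\<lambda>q::'a poly. map (coeff q) [0..<Suc k]"])
  have fin: "finite {xs :: 'a list. set xs \<subseteq> UNIV \<and> length xs = Suc k}"
    by (rule finite_lists_length_eq) simp
  have "(\<lambda>q::'a poly. map (coeff q) [0..<Suc k]) ` {q. degree q \<le> k} \<subseteq> {xs :: 'a list. set xs \<subseteq> UNIV \<and> length xs = Suc k}"
    by auto
  then show "finite ((\<lambda>q::'a poly. map (coeff q) [0..<Suc k]) ` {q. degree q \<le> k})"
    by (rule rev_finite_subset[OF fin])
  show "inj_on (\<lambda>q::'a poly. map (coeff q) [0..<Suc k]) {q. degree q \<le> k}"
  proof (rule inj_onI)
    fix p q :: "'a poly" assume p: "p \<in> {q. degree q \<le> k}" and q: "q \<in> {q. degree q \<le> k}"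
      and e: "map (coeff p) [0..<Suc k] = map (coeff q) [0..<Suc k]"
    show "p = q"
    proof (rule poly_eqI)
      fix i show "coeff p i = coeff q i"
      proof (cases "i \<le> k")
        case True then show ?thesis using e by (auto simp: map_eq_conv simp del: upt_Suc)
      next
        case False then show ?thesis using p q by (simp add: coeff_eq_0)
      qed
    qed
  qed
qed

lemma y_transc:
  fixes emb :: "'a::{field,finite} \<Rightarrow> 'b::field" and a :: 'a
  assumes fe: "field_embedding emb" and tr: "transcendental_over emb x"
    and rel: "emb a * x ^ n * y ^ m + x ^ n + y ^ m = 1"
    and a1: "a \<noteq> -1" and n: "n > 0" and m: "m > 0"
  shows "transcendental_over emb y"
  unfolding transcendental_over_def
proof (intro allI impI notI)
  interpret h: field_hom emb by (rule fe_hom[OF fe])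
  fix P :: "'a poly" assume P0: "P \<noteq> 0" and Py: "poly (map_poly emb P) y = 0"
  define evx where "evx q = poly (map_poly emb q) x" for q
  define evy where "evy q = poly (map_poly emb q) y" for q
  have trx: "q = 0" if "evx q = 0" for q using tr that unfolding transcendental_over_def evx_def by blast
  define w where "w = x ^ n"
  define v where "v = y ^ m"
  define ea where "ea = emb a"
  have rel': "v * (ea*w + 1) = 1 - w" using rel unfolding v_def w_def ea_def by (simp add: algebra_simps)
  have XX: "map_poly emb [:0,1:] = [:0,1:]" by (simp add: map_poly_pCons)
  have v0: "v \<noteq> 0"
  proof
    assume "v = 0"
    then have w1: "w = 1" using rel' by simp
    have "evx (monom 1 n - 1) = 0" unfolding evx_def using w1
      by (simp add: map_poly_emb_diff[OF fe] map_poly_monom poly_monom w_def)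
    then have "monom 1 n - 1 = (0::'a poly)" by (rule trx)
    then have "coeff (monom 1 n - 1) n = (0::'a)" by simp
    then show False using n by (simp add: coeff_monom)
  qed
  define f where "f j = [:0,1:]^(m*j) mod P" for j
  have fr: "range f \<subseteq> {q. degree q \<le> degree P}"
  proof
    fix q assume "q \<in> range f"
    then obtain j where q: "q = f j" by auto
    show "q \<in> {q. degree q \<le> degree P}"
      using degree_mod_less[OF P0, of "[:0,1:]^(m*j)"] unfolding q f_def by auto
  qed
  have "\<not> inj f"
  proof
    assume "inj f"
    then have "infinite (range f)" using range_inj_infinite by blast
    then show False using finite_subset[OF fr finite_deg] by blast
  qed
  then obtain i j where ij: "i \<noteq> j" "f i = f j" unfolding inj_def by blast
  have evf: "evy (f k) = v ^ k" for k
  proof -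
    have "[:0,1:]^(m*k) = [:0,1:]^(m*k) div P * P + f k" unfolding f_def by simp
    then have "evy ([:0,1:]^(m*k)) = evy ([:0,1:]^(m*k) div P) * evy P + evy (f k)"
      unfolding evy_def by (metis map_poly_emb_add[OF fe] map_poly_emb_mult[OF fe] poly_add poly_mult)
    moreover have "evy P = 0" using Py by (simp add: evy_def)
    moreover have "evy ([:0,1:]^(m*k)) = v ^ k" unfolding evy_def v_def
      by (simp add: map_poly_emb_power[OF fe] XX power_mult)
    ultimately show ?thesis by simp
  qed
  have "\<exists>k>0. v ^ k = 1"
  proof -
    have "v ^ i = v ^ j" using ij(2) evf by metis
    moreover have "v ^ i \<noteq> 0" "v ^ j \<noteq> 0" using v0 by auto
    ultimately show ?thesis using ij(1)
    proof (cases "i < j")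
      case True
      have "v ^ i * v ^ (j - i) = v ^ j" using True by (simp add: power_add[symmetric])
      then have "v ^ i * v ^ (j - i) = v ^ i * 1" using \<open>v^i = v^j\<close> by simp
      then have "v ^ (j - i) = 1" using mult_left_cancel[OF \<open>v^i \<noteq> 0\<close>] by blast
      then show ?thesis using True by (intro exI[of _ "j-i"]) simp
    next
      case False then have ji: "j < i" using ij(1) by simp
      have "v ^ j * v ^ (i - j) = v ^ i" using ji by (simp add: power_add[symmetric])
      then have "v ^ j * v ^ (i - j) = v ^ j * 1" using \<open>v^i = v^j\<close> by simp
      then have "v ^ (i - j) = 1" using mult_left_cancel[OF \<open>v^j \<noteq> 0\<close>] by blast
      then show ?thesis using ji by (intro exI[of _ "i-j"]) simp
    qed
  qed
  then obtain k where k0: "k > 0" and vk: "v ^ k = 1" by blast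
  define R where "R = (1 - monom 1 n)^k - (1 + monom a n)^k"
  have "(1 - w)^k = (ea*w+1)^k"
  proof -
    have "(1 - w)^k = v^k * (ea*w+1)^k" using rel' by (metis power_mult_distrib)
    then show ?thesis using vk by simp
  qed
  then have "evx R = 0" unfolding evx_def R_def
    by (simp add: map_poly_emb_diff[OF fe] map_poly_emb_add[OF fe] map_poly_emb_power[OF fe]
        map_poly_monom poly_monom w_def ea_def add.commute)
  then have "R = 0" by (rule trx)
  then have "poly R 1 = 0" by simp
  moreover have "poly R 1 = - ((1 + a)^k)" unfolding R_def using k0 by (simp add: poly_monom)
  moreover have "1 + a \<noteq> 0" using a1 by (metis add.commute eq_neg_iff_add_eq_0)
  ultimately show False by simp
qed

fun cc :: "('b::field \<Rightarrow> 'b) \<Rightarrow> 'b \<Rightarrow> nat \<Rightarrow> nat \<Rightarrow> 'b" where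
  "cc dd \<xi> 0 j = (if j = 0 then 1 else 0)"
| "cc dd \<xi> (Suc i) j = \<xi> / of_nat (Suc i) * (dd (cc dd \<xi> i j) + (if j = 0 then 0 else cc dd \<xi> i (j - 1)))"

lemma sum6: "(\<Sum>j<(6::nat). f j) = f 0 + f 1 + f 2 + f 3 + f 4 + (f 5 :: 'a::comm_monoid_add)"
  by (simp add: eval_nat_numeral add.assoc)

lemma funpow_zero_const:
  fixes dd :: "'b::field \<Rightarrow> 'b"
  assumes "dd 0 = 0" "dd c = 0" "0 < k"
  shows "(dd^^k) c = 0"
proof -
  have z: "(dd^^j) 0 = 0" for j by (induction j) (auto simp: assms(1))
  obtain j where k: "k = Suc j" using assms(3) by (cases k) auto
  show ?thesis unfolding k funpow_Suc_right o_apply assms(2) z ..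
qed

lemma reduce:
  fixes emb :: "'a::field \<Rightarrow> 'b::field" and D :: "nat \<Rightarrow> 'b \<Rightarrow> 'b"
  assumes fe: "field_embedding emb" and H: "hasse_derivatives_wrt emb \<tau> D"
    and ch: "\<And>k. 0 < k \<Longrightarrow> k \<le> 5 \<Longrightarrow> of_nat k \<noteq> (0::'b)"
    and xi: "D 1 u \<noteq> 0"
    and det0: "det (mat 6 6 (\<lambda>(i,j). D i (conic_monomials u v ! j))) = 0"
  shows "is_deriv emb (\<lambda>w. D 1 w / D 1 u) \<and> (\<lambda>w. D 1 w / D 1 u) u = 1 \<and>
    ((\<lambda>w. D 1 w / D 1 u)^^2) v * (40*(((\<lambda>w. D 1 w / D 1 u)^^3) v)^3
       - 45*((\<lambda>w. D 1 w / D 1 u)^^2) v*((\<lambda>w. D 1 w / D 1 u)^^3) v*((\<lambda>w. D 1 w / D 1 u)^^4) v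
       + 9*(((\<lambda>w. D 1 w / D 1 u)^^2) v)^2*((\<lambda>w. D 1 w / D 1 u)^^5) v) = 0"
proof -
  define \<xi> where "\<xi> = D 1 u"
  define dd where "dd = (\<lambda>w. D 1 w / \<xi>)"
  have D0: "D 0 w = w" for w using H by (simp add: hasse_derivatives_wrt_def)
  have Dadd: "D k (w + z) = D k w + D k z" for k w z using H by (simp add: hasse_derivatives_wrt_def)
  have Dmul: "D k (w * z) = (\<Sum>i\<le>k. D i w * D (k - i) z)" for k w z using H by (simp add: hasse_derivatives_wrt_def)
  have Demb: "D k (emb c) = 0" if "0 < k" for k c using H that by (simp add: hasse_derivatives_wrt_def)
  have Dit: "D i (D j w) = of_nat ((i + j) choose i) * D (i + j) w" for i j w using H by (simp add: hasse_derivatives_wrt_def)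
  have D1mul: "D 1 (w * z) = w * D 1 z + D 1 w * z" for w z using Dmul[of 1 w z] by (simp add: D0)
  have ddd: "is_deriv emb dd" unfolding is_deriv_def
  proof (intro conjI allI)
    fix w z
    show "dd (w + z) = dd w + dd z" unfolding dd_def Dadd by (simp add: add_divide_distrib)
    show "dd (w * z) = w * dd z + dd w * z" unfolding dd_def D1mul by (simp add: add_divide_distrib)
  next
    fix c show "dd (emb c) = 0" unfolding dd_def using Demb[of 1 c] by simp
  qed
  have xi0: "\<xi> \<noteq> 0" using xi by (simp add: \<xi>_def)
  have ddu: "dd u = 1" unfolding dd_def \<xi>_def using xi by simp
  have dd0: "dd 0 = 0" using d_0[OF fe ddd] .
  have Dsuc: "D (Suc k) w = \<xi> * dd (D k w) / of_nat (Suc k)" if "k \<le> 4" for k w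
  proof -
    have e: "D 1 (D k w) = of_nat (Suc k) * D (Suc k) w" using Dit[of 1 k w] by simp
    have nz: "of_nat (Suc k) \<noteq> (0::'b)" using ch[of "Suc k"] that by simp
    have "\<xi> * dd (D k w) / of_nat (Suc k) = D 1 (D k w) / of_nat (Suc k)"
      unfolding dd_def \<xi>_def using xi by simp
    also have "\<dots> = D (Suc k) w" unfolding e using nz by simp
    finally show ?thesis by simp
  qed
  let ?c = "cc dd \<xi>"
  have cz: "?c i j = 0" if "i < j" for i j
    using that proof (induction i arbitrary: j)
    case 0 then show ?case by simp
  next
    case (Suc i) then show ?case by (simp add: dd0)
  qed
  have cd: "?c i i = \<xi>^i / of_nat (fact i)" for i
  proof (induction i)
    case 0 then show ?case by simp
  next
    case (Suc i)
    have "?c (Suc i) (Suc i) = \<xi> / of_nat (Suc i) * (\<xi>^i / of_nat (fact i))" using cz[of i "Suc i"] Suc by (simp add: dd0)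
    then show ?case by (simp add: fact_Suc of_nat_mult[symmetric] field_simps del: of_nat_mult of_nat_Suc)
  qed
  have main: "D i w = (\<Sum>j<6. ?c i j * (dd^^j) w)" if "i < 6" for i w
    using that proof (induction i arbitrary: w)
    case 0 then show ?case by (simp add: sum6 D0)
  next
    case (Suc i)
    have c5: "?c i 5 = 0" using cz[of i 5] Suc.prems by simp
    have "D (Suc i) w = \<xi> * dd (D i w) / of_nat (Suc i)" using Dsuc[of i w] Suc.prems by simp
    also have "\<dots> = \<xi> * dd (\<Sum>j<6. ?c i j * (dd^^j) w) / of_nat (Suc i)" using Suc by simp
    also have "\<dots> = (\<xi> / of_nat (Suc i)) * dd (\<Sum>j<6. ?c i j * (dd^^j) w)" by simp
    also have "\<dots> = (\<Sum>j<6. ?c (Suc i) j * (dd^^j) w)"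
      unfolding sum6 using c5
      by (simp add: d_add[OF fe ddd] d_mult[OF fe ddd] dd0 eval_nat_numeral algebra_simps del: of_nat_Suc)
    finally show ?case .
  qed
  define Mx where "Mx = mat 6 6 (\<lambda>(i,j). D i (conic_monomials u v ! j))"
  define Cm where "Cm = mat 6 6 (\<lambda>(i,j). ?c i j)"
  define Bm where "Bm = mat 6 6 (\<lambda>(i,j). (dd^^i) (conic_monomials u v ! j))"
  have MCB: "Mx = Cm * Bm"
    by (rule eq_matI) (auto simp: Mx_def Cm_def Bm_def scalar_prod_def main atLeast0LessThan)
  have detC: "det Cm = prod_list (diag_mat Cm)"
    by (rule det_lower_triangular[of 6]) (auto simp: Cm_def cz)
  have fnz: "of_nat (fact i) \<noteq> (0::'b)" if "i \<le> 5" for i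
    using that proof (induction i)
    case 0 then show ?case by simp
  next
    case (Suc i)
    have "of_nat (fact (Suc i)) = of_nat (Suc i) * (of_nat (fact i) :: 'b)" by (simp only: fact_Suc of_nat_mult of_nat_id)
    then show ?case using ch[of "Suc i"] Suc by (simp del: of_nat_Suc)
  qed
  have "prod_list (diag_mat Cm) = (\<Prod>i = 0..<6. Cm $$ (i,i))"
    by (simp add: prod_list_diag_prod Cm_def)
  also have "\<dots> \<noteq> 0"
  proof -
    have "Cm $$ (i,i) \<noteq> 0" if "i \<in> {0..<6}" for i
      using that fnz[of i] xi0 by (simp add: Cm_def cd)
    then show ?thesis by (simp add: prod_zero_iff)
  qed
  finally have detC0: "det Cm \<noteq> 0" using detC by simp
  have "det Mx = det Cm * det Bm" unfolding MCB
    by (rule det_mult[of _ 6]) (simp_all add: Cm_def Bm_def)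
  then have detB0: "det Bm = 0" using det0 detC0 unfolding Mx_def by simp
  have dA: "dd (w + z) = dd w + dd z" "dd (w * z) = w * dd z + dd w * z" "dd (numeral q) = 0" "dd 1 = 0" for w z q
    using d_add[OF fe ddd] d_mult[OF fe ddd] d_numeral[OF fe ddd] d_1[OF fe ddd] by auto
  have fk: "(dd^^0) w = w" "(dd^^1) w = dd w" "(dd^^2) w = dd (dd w)" "(dd^^3) w = dd (dd (dd w))"
    "(dd^^4) w = dd (dd (dd (dd w)))" "(dd^^5) w = dd (dd (dd (dd (dd w))))" for w
    by (simp_all add: eval_nat_numeral)
  define V1 where "V1 = dd v"
  define V2 where "V2 = dd V1"
  define V3 where "V3 = dd V2"
  define V4 where "V4 = dd V3"
  define V5 where "V5 = dd V4"
  have Vr: "dd v = V1" "dd V1 = V2" "dd V2 = V3" "dd V3 = V4" "dd V4 = V5"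
    by (simp_all add: V1_def V2_def V3_def V4_def V5_def)
  have U2: "(dd^^2) (u^2) = 2" unfolding fk(3) power2_eq_square by (simp add: dA ddu)
  have z0: "(dd^^k) 1 = 0" if "0 < k" for k by (rule funpow_zero_const[OF dd0 dA(4) that])
  have z1: "(dd^^k) u = 0" if k1: "1 < k" for k
  proof -
    obtain j where k: "k = Suc j" and j: "0 < j" using k1 by (cases k) auto
    show ?thesis unfolding k funpow_Suc_right o_apply ddu using z0[OF j] .
  qed
  have z3: "(dd^^k) (u^2) = 0" if k2: "2 < k" for k
  proof -
    define j where "j = k - 2"
    have k: "k = Suc (Suc j)" and j: "0 < j" using k2 by (simp_all add: j_def)
    have "dd (dd (u^2)) = 2" unfolding power2_eq_square by (simp add: dA ddu)
    then show ?thesis unfolding k funpow_Suc_right o_apply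
      using funpow_zero_const[OF dd0 dA(3)[of "num.Bit0 num.One"] j] by simp
  qed
  have "det Bm = - ((dd^^0) 1) * (dd^^1) u * (dd^^2) (u^2) *
     ((dd^^3) v * ((dd^^4) (u*v) * (dd^^5) (v^2) - (dd^^4) (v^2) * (dd^^5) (u*v))
     - (dd^^4) v * ((dd^^3) (u*v) * (dd^^5) (v^2) - (dd^^3) (v^2) * (dd^^5) (u*v))
     + (dd^^5) v * ((dd^^3) (u*v) * (dd^^4) (v^2) - (dd^^3) (v^2) * (dd^^4) (u*v)))"
    unfolding Bm_def
    by (subst det6_pattern) (auto simp: conic_monomials_def z0 z1 z3)
  also have "\<dots> = - 4 * ((dd^^2) v * (40*((dd^^3) v)^3 - 45*(dd^^2) v*(dd^^3) v*(dd^^4) v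
       + 9*((dd^^2) v)^2*(dd^^5) v))"
    unfolding fk power2_eq_square by (simp add: dA ddu Vr algebra_simps power3_eq_cube)
  finally have "4 * ((dd^^2) v * (40*((dd^^3) v)^3 - 45*(dd^^2) v*(dd^^3) v*(dd^^4) v
       + 9*((dd^^2) v)^2*(dd^^5) v)) = 0" using detB0 by simp
  moreover have "(4::'b) \<noteq> 0" using ch[of 4] by simp
  ultimately have W: "(dd^^2) v * (40*((dd^^3) v)^3 - 45*(dd^^2) v*(dd^^3) v*(dd^^4) v
       + 9*((dd^^2) v)^2*(dd^^5) v) = 0" by simp
  show ?thesis using ddd ddu W unfolding dd_def \<xi>_def by simp
qed

lemma basics:
  fixes emb :: "'a::field \<Rightarrow> 'b::field" and a :: 'a
  assumes fe: "field_embedding emb" and tr: "transcendental_over emb x"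
    and rel: "emb a * x ^ n * y ^ m + x ^ n + y ^ m = 1"
    and a1: "a \<noteq> -1" and n: "n > 0" and m: "m > 0"
  shows "x \<noteq> 0 \<and> y \<noteq> 0 \<and> emb a * x^n + 1 \<noteq> 0 \<and> emb a * y^m + 1 \<noteq> 0"
proof -
  interpret h: field_hom emb by (rule fe_hom[OF fe])
  define ev where "ev q = poly (map_poly emb q) x" for q
  have trz: "q = 0" if "ev q = 0" for q using tr that unfolding transcendental_over_def ev_def by blast
  have x0: "x \<noteq> 0" using trz[of "[:0,1:]"] by (auto simp: ev_def map_poly_pCons)
  have "ev (1 - monom 1 n) = 1 - x^n"
    by (simp add: ev_def map_poly_emb_diff[OF fe] map_poly_monom poly_monom)
  moreover have "1 - monom 1 n \<noteq> (0::'a poly)"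
  proof
    assume "1 - monom 1 n = (0::'a poly)"
    then have "coeff (1 - monom 1 n) 0 = (0::'a)" by simp
    then show False using n by (simp add: coeff_monom)
  qed
  ultimately have w1: "1 - x^n \<noteq> 0" using trz by metis
  have rel': "y^m * (emb a * x^n + 1) = 1 - x^n" using rel by (simp add: algebra_simps)
  have aw: "emb a * x^n + 1 \<noteq> 0" using rel' w1 by auto
  have y0: "y \<noteq> 0" using rel' w1 m by (auto simp: power_0_left)
  have rel'': "(emb a * y^m + 1) * (emb a * x^n + 1) = emb a + 1"
  proof -
    have "emb a * (emb a * x^n * y^m + x^n + y^m) = emb a" using rel by simp
    then show ?thesis by (simp add: algebra_simps)
  qed
  have "emb a + 1 \<noteq> 0"
  proof
    assume "emb a + 1 = 0"
    then have "emb (a + 1) = 0" by (simp add: h.hom_add)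
    then have "a + 1 = 0" by simp
    then show False using a1 eq_neg_iff_add_eq_0 by blast
  qed
  then have av: "emb a * y^m + 1 \<noteq> 0" using rel'' by auto
  show ?thesis using x0 y0 aw av by simp
qed

lemma drel:
  fixes emb :: "'a::field \<Rightarrow> 'b::field" and a :: 'a
  assumes fe: "field_embedding emb" and der: "is_deriv emb d"
    and rel: "emb a * x ^ n * y ^ m + x ^ n + y ^ m = 1"
  shows "of_nat n * x^(n-1) * d x * (emb a * y^m + 1) + of_nat m * y^(m-1) * d y * (emb a * x^n + 1) = 0"
proof -
  have "d (emb a * x ^ n * y ^ m + x ^ n + y ^ m) = d 1" using rel by simp
  then show ?thesis
    unfolding d_add[OF fe der] d_mult[OF fe der] d_emb[OF fe der] d_1[OF fe der] d_power'[OF fe der]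
    by (simp add: algebra_simps)
qed

lemma hasse_D1:
  assumes H: "hasse_derivatives_wrt emb \<tau> D"
  shows "is_deriv emb (D 1)"
proof -
  have D0: "D 0 w = w" for w using H by (simp add: hasse_derivatives_wrt_def)
  have Dmul: "D k (w * z) = (\<Sum>i\<le>k. D i w * D (k - i) z)" for k w z using H by (simp add: hasse_derivatives_wrt_def)
  have "D 1 (w * z) = w * D 1 z + D 1 w * z" for w z using Dmul[of 1 w z] by (simp add: D0)
  then show ?thesis using H unfolding is_deriv_def hasse_derivatives_wrt_def by auto
qed

lemma gen_field_const:
  assumes fe: "field_embedding emb" and der: "is_deriv emb d"
    and dx: "d x = 0" and dy: "d y = 0" and z: "z \<in> gen_field emb x y"
  shows "d z = 0"
  using z
proof (induction rule: gen_field.induct)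
  case (const c) then show ?case by (rule d_emb[OF fe der])
next
  case genx then show ?case by (rule dx)
next
  case geny then show ?case by (rule dy)
next
  case (add u v) then show ?case by (simp add: d_add[OF fe der])
next
  case (mult u v) then show ?case by (simp add: d_mult[OF fe der])
next
  case (uminus u) then show ?case by (simp add: d_uminus[OF fe der])
next
  case (inverse u)
  then show ?case by (cases "u = 0") (simp_all add: d_inverse[OF fe der] d_0[OF fe der])
qed

lemma no_lex_less:
  assumes "\<forall>i j. i < j \<longrightarrow> j < 6 \<longrightarrow> e i < (e j :: nat)"
  shows "\<not> lex_less6 e (\<lambda>i. i)"
proof
  assume "lex_less6 e (\<lambda>i. i)"
  then obtain k where k: "k < 6" "\<forall>i<k. e i = i" "e k < k" unfolding lex_less6_def by blast
  show False
  proof (cases k)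
    case 0 then show ?thesis using k by simp
  next
    case (Suc j)
    then have "e j < e k" using assms k(1) by auto
    moreover have "e j = j" using k(2) Suc by simp
    ultimately show ?thesis using k(3) Suc by simp
  qed
qed

lemma swap_det:
  fixes D :: "nat \<Rightarrow> 'b::field \<Rightarrow> 'b"
  shows "det (mat 6 6 (\<lambda>(i,j). D i (conic_monomials y x ! j))) = det (mat 6 6 (\<lambda>(i,j). D i (conic_monomials x y ! j)))"
proof -
  let ?M = "mat 6 6 (\<lambda>(i,j). D i (conic_monomials x y ! j))"
  have eq: "mat 6 6 (\<lambda>(i,j). D i (conic_monomials y x ! j)) = swapcols 1 2 (swapcols 3 5 ?M)"
  proof (rule eq_matI)
    fix i j assume i: "i < dim_row (swapcols 1 2 (swapcols 3 5 ?M))" and j: "j < dim_col (swapcols 1 2 (swapcols 3 5 ?M))"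
    then have "j < 6" by simp
    then have "j = 0 \<or> j = 1 \<or> j = 2 \<or> j = 3 \<or> j = 4 \<or> j = 5" by linarith
    then show "mat 6 6 (\<lambda>(i,j). D i (conic_monomials y x ! j)) $$ (i, j) = swapcols 1 2 (swapcols 3 5 ?M) $$ (i, j)"
      using i by (auto simp: conic_monomials_def mult.commute)
  qed auto
  have C: "?M \<in> carrier_mat 6 6" by simp
  have C2: "swapcols 3 5 ?M \<in> carrier_mat 6 6" by simp
  have d1: "det (swapcols 1 2 (swapcols 3 5 ?M)) = - det (swapcols 3 5 ?M)"
    by (rule det_swapcols[where n=6]) simp_all
  have d2: "det (swapcols 3 5 ?M) = - det ?M"
    by (rule det_swapcols[where n=6]) simp_all
  show ?thesis unfolding eq d1 d2 by simp
qed

lemma CHAR_dvd_card_field: "CHAR('a::{field,finite}) dvd card (UNIV::'a set)"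
proof -
  let ?c = "CHAR('a)"
  have c0: "?c > 0" by (rule finite_imp_CHAR_pos) simp
  define S where "S = range (of_nat :: nat \<Rightarrow> 'a)"
  have S_eq: "S = of_nat ` {..<?c}"
  proof
    show "S \<subseteq> of_nat ` {..<?c}"
    proof
      fix s assume "s \<in> S"
      then obtain k where s: "s = of_nat k" unfolding S_def by auto
      have "of_nat k = (of_nat (k div ?c * ?c + k mod ?c) :: 'a)" by simp
      also have "\<dots> = of_nat (k mod ?c)" by (simp only: of_nat_add of_nat_mult of_nat_CHAR) simp
      finally show "s \<in> of_nat ` {..<?c}" using s c0 by auto
    qed
  qed (auto simp: S_def)
  have inj: "inj_on (of_nat :: nat \<Rightarrow> 'a) {..<?c}"
  proof (rule inj_onI)
    have aux: "i = j" if "i \<le> j" "i < ?c" "j < ?c" "(of_nat i :: 'a) = of_nat j" for i j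
    proof -
      have "(of_nat (j - i) :: 'a) = 0" using that by (simp add: of_nat_diff)
      then have "?c dvd j - i" by (simp add: of_nat_eq_0_iff_char_dvd)
      moreover have "j - i < ?c" using that by simp
      ultimately show ?thesis using that by (metis diff_is_0_eq dvd_imp_le le_antisym neq0_conv not_less)
    qed
    fix i j assume "i \<in> {..<?c}" "j \<in> {..<?c}" "(of_nat i :: 'a) = of_nat j"
    then show "i = j" using aux[of i j] aux[of j i] by (cases "i \<le> j") auto
  qed
  have cardS: "card S = ?c" unfolding S_eq using card_image[OF inj] by simp
  have Sadd: "s + t \<in> S" if "s \<in> S" "t \<in> S" for s t
    using that unfolding S_def by (auto simp flip: of_nat_add)
  have Sneg: "- s \<in> S" if sS: "s \<in> S" for s
  proof -
    obtain k where s: "s = of_nat k" using sS unfolding S_def by auto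
    have "(of_nat ((?c - 1) * k) :: 'a) + of_nat k = of_nat (?c * k)" using c0
      by (simp flip: of_nat_add add: algebra_simps)
    also have "\<dots> = 0" by simp
    finally have "- s = of_nat ((?c - 1) * k)" unfolding s by (metis add.commute add_eq_0_iff)
    then show ?thesis unfolding S_def by (metis rangeI)
  qed
  define C where "C = (\<lambda>x. (+) x ` S) ` (UNIV :: 'a set)"
  have f1: "finite C" unfolding C_def by simp
  have f2: "finite (\<Union>C)" by simp
  have f3: "\<forall>c\<in>C. card c = ?c" unfolding C_def using cardS by (auto simp: card_image)
  have f4: "\<forall>c1\<in>C. \<forall>c2\<in>C. c1 \<noteq> c2 \<longrightarrow> c1 \<inter> c2 = {}"
    proof (intro ballI impI)
      fix c1 c2 assume c1: "c1 \<in> C" and c2: "c2 \<in> C" and ne: "c1 \<noteq> c2"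
      obtain x where x: "c1 = (+) x ` S" using c1 unfolding C_def by auto
      obtain y where y: "c2 = (+) y ` S" using c2 unfolding C_def by auto
      show "c1 \<inter> c2 = {}"
      proof (rule ccontr)
        assume "c1 \<inter> c2 \<noteq> {}"
        then obtain s t where st: "s \<in> S" "t \<in> S" "x + s = y + t" unfolding x y by auto
        have "c1 = c2"
        proof -
          have "(+) x ` S \<subseteq> (+) y ` S"
          proof
            fix z assume "z \<in> (+) x ` S"
            then obtain r where r: "r \<in> S" "z = x + r" by auto
            have "z = y + (t + - s + r)" using st r by (simp add: algebra_simps)
            moreover have "t + - s + r \<in> S" using st r Sadd Sneg by blast
            ultimately show "z \<in> (+) y ` S" by blast
          qed
          moreover have "(+) y ` S \<subseteq> (+) x ` S"
          proof
            fix z assume "z \<in> (+) y ` S"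
            then obtain r where r: "r \<in> S" "z = y + r" by auto
            have "z = x + (s + - t + r)" using st r by (simp add: algebra_simps)
            moreover have "s + - t + r \<in> S" using st r Sadd Sneg by blast
            ultimately show "z \<in> (+) x ` S" by blast
          qed
          ultimately show ?thesis unfolding x y by blast
        qed
        then show False using ne by simp
      qed
    qed
  have "?c * card C = card (\<Union>C)" by (rule card_partition) (use f1 f2 f3 f4 in auto)
  moreover have "\<Union>C = UNIV"
  proof -
    have "0 \<in> S" unfolding S_def by (metis of_nat_0 rangeI)
    then have "z \<in> (+) z ` S" for z by (metis add_0_right image_eqI)
    then show ?thesis unfolding C_def by blast
  qed
  ultimately show ?thesis by (metis dvd_triv_left)
qed

theorem proposition4p4:
  fixes a :: "'a::{field,finite}" and emb :: "'a \<Rightarrow> 'b::field"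
    and x y \<tau> :: 'b and D :: "nat \<Rightarrow> 'b \<Rightarrow> 'b" and p h m n :: nat
  assumes "prime p" and "p > 5" and "card (UNIV :: 'a set) = p ^ h"
    and "a \<noteq> 0" and "a \<noteq> -1"
    and "m > 0" and "n > 0" and "\<not> p dvd m * n" and "n \<ge> m" and "min m n > 2"
    and "generic_point_of_curve emb a n m x y"
    and "\<tau> \<in> gen_field emb x y"
    and "hasse_derivatives_wrt emb \<tau> D"
    and "\<not> classical_wrt_conics D x y"
  shows "p dvd (n + 1) * (n - 1) \<and> p dvd (m + 1) * (m - 1)"
proof -
  note p = assms(1) and p5 = assms(2) and card = assms(3) and a0 = assms(4) and a1 = assms(5)
    and m = assms(6) and n = assms(7) and pmn = assms(8) and H = assms(13)
  have fe: "field_embedding emb" and tr: "transcendental_over emb x"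
    and rel: "emb a * x ^ n * y ^ m + x ^ n + y ^ m = 1"
    using assms(11) by (simp_all add: generic_point_of_curve_def)
  interpret h: field_hom emb by (rule fe_hom[OF fe])
  have CH: "CHAR('a) = p"
  proof -
    have "CHAR('a) dvd p ^ h" using CHAR_dvd_card_field[where 'a='a] card by simp
    moreover have "prime CHAR('a)" by (rule prime_CHAR_semidom) (rule finite_imp_CHAR_pos, simp)
    ultimately have "CHAR('a) dvd p" using prime_dvd_power by blast
    then show ?thesis using p \<open>prime CHAR('a)\<close> by (simp add: primes_dvd_imp_eq)
  qed
  have ofnat_a: "of_nat k = (0::'a) \<longleftrightarrow> p dvd k" for k using of_nat_eq_0_iff_char_dvd[where 'a='a] CH by simp
  have ofint_a: "of_int z = (0::'a) \<longleftrightarrow> int p dvd z" for z using of_int_eq_0_iff_char_dvd[where 'a='a] CH by simp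
  have ofnat_b: "of_nat k = (0::'b) \<longleftrightarrow> p dvd k" for k
  proof -
    have "of_nat k = (0::'b) \<longleftrightarrow> emb (of_nat k) = 0" by (simp add: h.hom_of_nat)
    also have "\<dots> \<longleftrightarrow> of_nat k = (0::'a)" by simp
    finally show ?thesis using ofnat_a by simp
  qed
  have ch: "of_nat k \<noteq> (0::'b)" if "0 < k" "k \<le> 5" for k
    using ofnat_b[of k] that p5 by (auto dest: dvd_imp_le)
  have pn: "\<not> p dvd n" and pm: "\<not> p dvd m" using pmn by auto
  have nz: "of_nat n \<noteq> (0::'a)" and mz: "of_nat m \<noteq> (0::'a)" using pn pm ofnat_a by auto
  have nzb: "of_nat n \<noteq> (0::'b)" and mzb: "of_nat m \<noteq> (0::'b)" using pn pm ofnat_b by auto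
  \<comment> \<open>nonclassical means vanishing Wronskian\<close>
  have det0: "det (mat 6 6 (\<lambda>(i,j). D i (conic_monomials x y ! j))) = 0"
  proof (rule ccontr)
    assume ne: "det (mat 6 6 (\<lambda>(i,j). D i (conic_monomials x y ! j))) \<noteq> 0"
    have "classical_wrt_conics D x y"
      unfolding classical_wrt_conics_def admissible_conic_orders_def conic_det_def
      using ne no_lex_less by auto
    then show False using assms(14) by simp
  qed
  have det0': "det (mat 6 6 (\<lambda>(i,j). D i (conic_monomials y x ! j))) = 0"
    using det0 swap_det by metis
  have der1: "is_deriv emb (D 1)" by (rule hasse_D1[OF H])
  have B: "x \<noteq> 0 \<and> y \<noteq> 0 \<and> emb a * x^n + 1 \<noteq> 0 \<and> emb a * y^m + 1 \<noteq> 0"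
    by (rule basics[OF fe tr rel a1 n m])
  have DR: "of_nat n * x^(n-1) * D 1 x * (emb a * y^m + 1) + of_nat m * y^(m-1) * D 1 y * (emb a * x^n + 1) = 0"
    by (rule drel[OF fe der1 rel])
  have both: "D 1 x = 0 \<and> D 1 y = 0" if "D 1 x = 0 \<or> D 1 y = 0"
  proof (cases "D 1 x = 0")
    case True
    then have "of_nat m * y^(m-1) * D 1 y * (emb a * x^n + 1) = 0" using DR by simp
    then show ?thesis using True B mzb by simp
  next
    case False
    then have y0: "D 1 y = 0" using that by simp
    then have "of_nat n * x^(n-1) * D 1 x * (emb a * y^m + 1) = 0" using DR by simp
    then show ?thesis using False B nzb by simp
  qed
  have tau1: "D 1 \<tau> = 1" using H by (simp add: hasse_derivatives_wrt_def)
  have nz1: "D 1 x \<noteq> 0 \<and> D 1 y \<noteq> 0"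
  proof (rule ccontr)
    assume "\<not> (D 1 x \<noteq> 0 \<and> D 1 y \<noteq> 0)"
    then have "D 1 x = 0" "D 1 y = 0" using both by auto
    then have "D 1 \<tau> = 0" using gen_field_const[OF fe der1 _ _ assms(12)] by simp
    then show False using tau1 by simp
  qed
  obtain Wx: "is_deriv emb (\<lambda>w. D 1 w / D 1 x)" "(\<lambda>w. D 1 w / D 1 x) x = 1"
    "((\<lambda>w. D 1 w / D 1 x)^^2) y * (40*(((\<lambda>w. D 1 w / D 1 x)^^3) y)^3
       - 45*((\<lambda>w. D 1 w / D 1 x)^^2) y*((\<lambda>w. D 1 w / D 1 x)^^3) y*((\<lambda>w. D 1 w / D 1 x)^^4) y
       + 9*(((\<lambda>w. D 1 w / D 1 x)^^2) y)^2*((\<lambda>w. D 1 w / D 1 x)^^5) y) = 0"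
    using reduce[OF fe H ch _ det0] nz1 by blast
  have Kx: "of_int (int n - 1) = (0::'a) \<or>
    (of_int (2*(int n-1)^3*(int n-2)*(2*int n-1)*(int n+1)) = (0::'a) \<and>
     of_int (2*(int n+1)^3*(int n+2)*(2*int n+1)*(int n-1)) = (0::'a))"
    by (rule key[OF fe Wx(1) tr rel a0 a1 n m nz mz Wx(2) Wx(3)])
  have Kx': "int p dvd (int n - 1) \<or> (int p dvd (2*(int n-1)^3*(int n-2)*(2*int n-1)*(int n+1)) \<and>
      int p dvd (2*(int n+1)^3*(int n+2)*(2*int n+1)*(int n-1)))"
    using Kx unfolding ofint_a .
  have resn: "p dvd (n+1)*(n-1)"
    by (rule nt[OF p p5 _ Kx']) (use n in simp)
  \<comment> \<open>condition on m, by symmetry\<close>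
  have ytr: "transcendental_over emb y" by (rule y_transc[OF fe tr rel a1 n m])
  have rely: "emb a * y ^ m * x ^ n + y ^ m + x ^ n = 1" using rel by (simp add: algebra_simps)
  obtain Wy: "is_deriv emb (\<lambda>w. D 1 w / D 1 y)" "(\<lambda>w. D 1 w / D 1 y) y = 1"
    "((\<lambda>w. D 1 w / D 1 y)^^2) x * (40*(((\<lambda>w. D 1 w / D 1 y)^^3) x)^3
       - 45*((\<lambda>w. D 1 w / D 1 y)^^2) x*((\<lambda>w. D 1 w / D 1 y)^^3) x*((\<lambda>w. D 1 w / D 1 y)^^4) x
       + 9*(((\<lambda>w. D 1 w / D 1 y)^^2) x)^2*((\<lambda>w. D 1 w / D 1 y)^^5) x) = 0"
    using reduce[OF fe H ch _ det0'] nz1 by blast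
  have Ky: "of_int (int m - 1) = (0::'a) \<or>
    (of_int (2*(int m-1)^3*(int m-2)*(2*int m-1)*(int m+1)) = (0::'a) \<and>
     of_int (2*(int m+1)^3*(int m+2)*(2*int m+1)*(int m-1)) = (0::'a))"
    by (rule key[OF fe Wy(1) ytr rely a0 a1 m n mz nz Wy(2) Wy(3)])
  have Ky': "int p dvd (int m - 1) \<or> (int p dvd (2*(int m-1)^3*(int m-2)*(2*int m-1)*(int m+1)) \<and>
      int p dvd (2*(int m+1)^3*(int m+2)*(2*int m+1)*(int m-1)))"
    using Ky unfolding ofint_a .
  have resm: "p dvd (m+1)*(m-1)"
    by (rule nt[OF p p5 _ Ky']) (use m in simp)
  show ?thesis using resn resm by simp
qed

end
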